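(* Let $(M,\cdot,1)$ be a monoid without a zero element, $\Sigma$ a finite alphabet, and $(g_h,h)$ a maximal factorization on $L$. Then $\mathcal{R}_L=\mathrm{RcgCap}^{(g_h,h)}_L$.
   Context: $L$ is the set of all functions $\Sigma^*\to M$; $\varepsilon$ the empty word; $(m\cdot\ell)(\gamma)=m\cdot\ell(\gamma)$; $\Delta_\alpha(\ell)(\gamma)=\ell(\alpha\gamma)$. A factorization on $L$ is a pair $g:L\to M$, $f:L\to L$ with $g(\ell)\cdot f(\ell)=\ell$ for all $\ell$; it is maximal if moreover $f(m\cdot\ell)=f(\ell)$ for all $\ell\in L$, $m\in M$. Define $S^{(g,f)}_\varepsilon=\mathrm{id}_L$, $S^{(g,f)}_{\alpha\sigma}=f\circ\Delta_\sigma\circ S^{(g,f)}_\alpha$. An $M$-DFA is $(Q,\Sigma,u,i_u,\delta,w,\rho)$ with $Q$ finite nonempty, initial state $u$, initial value $i_u\in M$, $\delta:Q\times\Sigma\to Q$, $w:Q\times\Sigma\to M$, $\rho:Q\to M$; with $q\alpha$ the extended transition and $w^*(q,\varepsilon)=1$, $w^*(q,\alpha\sigma)=w^*(q,\alpha)\cdot w(q\alpha,\sigma)$, it recognizes $\alpha\mapsto i_u\cdot w^*(u,\alpha)\cdot\rho(u\alpha)$. $\mathcal{R}_L$ is the set of $M$-languages recognized by some $M$-DFA. For a factorization $(g,f)$, $\mathrm{RcgCap}^{(g,f)}_L$ is the set of $\ell\in L$ such that the automaton $N^{(g,f)}(f(\ell),1)$ is an $M$-DFA, i.e. such that $\{S^{(g,f)}_\alpha(f(\ell))\mid\alpha\in\Sigma^*\}$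 is finite; here $N^{(g,f)}(\ell',m)$ has states $S^{(g,f)}_\alpha(\ell')$, initial state $\ell'$, initial value $m$, $\delta(S^{(g,f)}_\alpha(\ell'),\sigma)=S^{(g,f)}_{\alpha\sigma}(\ell')$, $w(S^{(g,f)}_\alpha(\ell'),\sigma)=g(\Delta_\sigma(S^{(g,f)}_\alpha(\ell')))$, $\rho(S^{(g,f)}_\alpha(\ell'))=(S^{(g,f)}_\alpha(\ell'))(\varepsilon)$. *)

theory Defs
  imports Main
begin

definition lmult :: "'m::monoid_mult \<Rightarrow> ('b list \<Rightarrow> 'm) \<Rightarrow> ('b list \<Rightarrow> 'm)" where
  "lmult m l = (\<lambda>\<gamma>. m * l \<gamma>)"

definition Delta :: "'b list \<Rightarrow> ('b list \<Rightarrow> 'm) \<Rightarrow> ('b list \<Rightarrow> 'm)" where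
  "Delta \<alpha> l = (\<lambda>\<gamma>. l (\<alpha> @ \<gamma>))"

definition has_zero :: "'m::monoid_mult itself \<Rightarrow> bool" where
  "has_zero _ = (\<exists>z::'m. \<forall>m. z * m = z \<and> m * z = z)"

definition factorization ::
  "(('b list \<Rightarrow> 'm::monoid_mult) \<Rightarrow> 'm) \<Rightarrow> (('b list \<Rightarrow> 'm) \<Rightarrow> ('b list \<Rightarrow> 'm)) \<Rightarrow> bool" where
  "factorization g f = (\<forall>l. lmult (g l) (f l) = l)"

definition maximal_factorization ::
  "(('b list \<Rightarrow> 'm::monoid_mult) \<Rightarrow> 'm) \<Rightarrow> (('b list \<Rightarrow> 'm) \<Rightarrow> ('b list \<Rightarrow> 'm)) \<Rightarrow> bool" where
  "maximal_factorization g f = (factorization g f \<and> (\<forall>l m. f (lmult m l) = f l))"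

text \<open>S_eps = id, S_(alpha sigma) = f o Delta_sigma o S_alpha (words processed left to right).\<close>
definition S :: "(('b list \<Rightarrow> 'm) \<Rightarrow> ('b list \<Rightarrow> 'm)) \<Rightarrow> 'b list \<Rightarrow> ('b list \<Rightarrow> 'm) \<Rightarrow> ('b list \<Rightarrow> 'm)" where
  "S f \<alpha> = fold (\<lambda>\<sigma> h. f \<circ> Delta [\<sigma>] \<circ> h) \<alpha> id"

definition RcgCap ::
  "(('b list \<Rightarrow> 'm::monoid_mult) \<Rightarrow> 'm) \<Rightarrow> (('b list \<Rightarrow> 'm) \<Rightarrow> ('b list \<Rightarrow> 'm)) \<Rightarrow> ('b list \<Rightarrow> 'm) set" where
  "RcgCap g f = {l. finite {S f \<alpha> (f l) | \<alpha>. True}}"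

text \<open>M-DFAs. States are natural numbers (any finite state set can be renamed into nat).\<close>
definition is_MDFA :: "nat set \<Rightarrow> nat \<Rightarrow> (nat \<Rightarrow> 'b \<Rightarrow> nat) \<Rightarrow> bool" where
  "is_MDFA Q u \<delta> = (finite Q \<and> Q \<noteq> {} \<and> u \<in> Q \<and> (\<forall>q\<in>Q. \<forall>\<sigma>. \<delta> q \<sigma> \<in> Q))"

definition ext_trans :: "(nat \<Rightarrow> 'b \<Rightarrow> nat) \<Rightarrow> nat \<Rightarrow> 'b list \<Rightarrow> nat" where
  "ext_trans \<delta> q \<alpha> = fold (\<lambda>\<sigma> p. \<delta> p \<sigma>) \<alpha> q"

text \<open>w*(q,eps) = 1, w*(q, alpha sigma) = w*(q,alpha) * w(q alpha, sigma); defined on the reversed word.\<close>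
fun wstar_rev :: "(nat \<Rightarrow> 'b \<Rightarrow> nat) \<Rightarrow> (nat \<Rightarrow> 'b \<Rightarrow> 'm::monoid_mult) \<Rightarrow> nat \<Rightarrow> 'b list \<Rightarrow> 'm" where
  "wstar_rev \<delta> w q [] = 1"
| "wstar_rev \<delta> w q (\<sigma> # \<beta>) = wstar_rev \<delta> w q \<beta> * w (ext_trans \<delta> q (rev \<beta>)) \<sigma>"

definition wstar :: "(nat \<Rightarrow> 'b \<Rightarrow> nat) \<Rightarrow> (nat \<Rightarrow> 'b \<Rightarrow> 'm::monoid_mult) \<Rightarrow> nat \<Rightarrow> 'b list \<Rightarrow> 'm" where
  "wstar \<delta> w q \<alpha> = wstar_rev \<delta> w q (rev \<alpha>)"

definition recognized ::
  "nat \<Rightarrow> 'm::monoid_mult \<Rightarrow> (nat \<Rightarrow> 'b \<Rightarrow> nat) \<Rightarrow> (nat \<Rightarrow> 'b \<Rightarrow> 'm) \<Rightarrow> (nat \<Rightarrow> 'm) \<Rightarrow> ('b list \<Rightarrow> 'm)" where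
  "recognized u i \<delta> w \<rho> = (\<lambda>\<alpha>. i * wstar \<delta> w u \<alpha> * \<rho> (ext_trans \<delta> u \<alpha>))"

definition R_L :: "('b list \<Rightarrow> 'm::monoid_mult) set" where
  "R_L = {l. \<exists>Q u i \<delta> w \<rho>. is_MDFA Q u \<delta> \<and> l = recognized u i \<delta> w \<rho>}"

end

theory Submission
  imports Defs
begin

lemma S_nil[simp]: "S f [] = id"
  by (simp add: S_def)

lemma S_snoc[simp]: "S f (\<alpha> @ [\<sigma>]) x = f (Delta [\<sigma>] (S f \<alpha> x))"
  by (simp add: S_def)

lemma ext_trans_nil[simp]: "ext_trans \<delta> q [] = q"
  by (simp add: ext_trans_def)

lemma ext_trans_append: "ext_trans \<delta> q (\<alpha> @ \<beta>) = ext_trans \<delta> (ext_trans \<delta> q \<alpha>) \<beta>"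
  by (simp add: ext_trans_def)

lemma ext_trans_snoc[simp]: "ext_trans \<delta> q (\<alpha> @ [\<sigma>]) = \<delta> (ext_trans \<delta> q \<alpha>) \<sigma>"
  by (simp add: ext_trans_def)

lemma ext_trans_cons[simp]: "ext_trans \<delta> q (\<sigma> # \<alpha>) = ext_trans \<delta> (\<delta> q \<sigma>) \<alpha>"
  by (simp add: ext_trans_def)

lemma wstar_nil[simp]: "wstar \<delta> w q [] = 1"
  by (simp add: wstar_def)

lemma wstar_snoc[simp]: "wstar \<delta> w q (\<alpha> @ [\<sigma>]) = wstar \<delta> w q \<alpha> * w (ext_trans \<delta> q \<alpha>) \<sigma>"
  by (simp add: wstar_def)

lemma wstar_append: "wstar \<delta> w q (\<alpha> @ \<beta>) = wstar \<delta> w q \<alpha> * wstar \<delta> w (ext_trans \<delta> q \<alpha>) \<beta>"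
proof (induction \<beta> rule: rev_induct)
  case Nil
  then show ?case by simp
next
  case (snoc x xs)
  have "wstar \<delta> w q (\<alpha> @ xs @ [x]) = wstar \<delta> w q ((\<alpha> @ xs) @ [x])" by simp
  also have "\<dots> = wstar \<delta> w q \<alpha> * wstar \<delta> w (ext_trans \<delta> q \<alpha>) xs * w (ext_trans \<delta> (ext_trans \<delta> q \<alpha>) xs) x"
    by (simp only: wstar_snoc snoc ext_trans_append)
  finally show ?case by (simp add: mult.assoc)
qed

lemma wstar_cons: "wstar \<delta> w q (\<sigma> # \<beta>) = w q \<sigma> * wstar \<delta> w (\<delta> q \<sigma>) \<beta>"
  using wstar_append[of \<delta> w q "[\<sigma>]" \<beta>]
  using wstar_snoc[of \<delta> w q "[]" \<sigma>] by simp

lemma key_h: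
  assumes "maximal_factorization g h"
  shows "h (Delta [\<sigma>] (h l)) = h (Delta [\<sigma>] l)"
proof -
  have f: "lmult (g l) (h l) = l" and m: "\<And>l m. h (lmult m l) = h l"
    using assms unfolding maximal_factorization_def factorization_def by auto
  have "Delta [\<sigma>] l = lmult (g l) (Delta [\<sigma>] (h l))"
    by (subst f[symmetric]) (simp add: Delta_def lmult_def)
  then show ?thesis using m by metis
qed

lemma dir2:
  assumes mf: "maximal_factorization g h"
    and M: "is_MDFA Q u \<delta>"
  shows "finite {S h \<alpha> (h (recognized u i \<delta> w \<rho>)) | \<alpha>. True}"
proof -
  define L where "L q = (\<lambda>\<gamma>. wstar \<delta> w q \<gamma> * \<rho> (ext_trans \<delta> q \<gamma>))" for q
  have m: "\<And>l m. h (lmult m l) = h l"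
    using mf unfolding maximal_factorization_def by auto
  have rec: "recognized u i \<delta> w \<rho> = lmult i (L u)"
    by (simp add: recognized_def lmult_def L_def mult.assoc)
  have DL: "Delta [\<sigma>] (L q) = lmult (w q \<sigma>) (L (\<delta> q \<sigma>))" for q \<sigma>
    by (simp add: Delta_def lmult_def L_def wstar_cons mult.assoc)
  have inQ: "ext_trans \<delta> u \<alpha> \<in> Q" for \<alpha>
    using M by (induction \<alpha> rule: rev_induct) (auto simp: is_MDFA_def)
  have main: "S h \<alpha> (h (L u)) = h (L (ext_trans \<delta> u \<alpha>))" for \<alpha>
  proof (induction \<alpha> rule: rev_induct)
    case Nil
    then show ?case by simp
  next
    case (snoc x xs)
    show ?case using snoc key_h[OF mf] by (simp add: DL m)
  qed
  have "{S h \<alpha> (h (recognized u i \<delta> w \<rho>)) | \<alpha>. True} \<subseteq> (\<lambda>q. h (L q)) ` Q"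
    using main inQ by (auto simp: rec m)
  moreover have "finite Q" using M by (simp add: is_MDFA_def)
  ultimately show ?thesis by (meson finite_surj)
qed

lemma dir1:
  assumes mf: "maximal_factorization g h"
    and fin: "finite {S h \<alpha> (h l) | \<alpha>. True}"
  shows "l \<in> R_L"
proof -
  define T where "T \<alpha> = S h \<alpha> (h l)" for \<alpha>
  define X where "X = {S h \<alpha> (h l) | \<alpha>. True}"
  have fl: "\<And>l. lmult (g l) (h l) = l"
    using mf unfolding maximal_factorization_def factorization_def by auto
  obtain e where e: "bij_betw e {0..<card X} X"
    using ex_bij_betw_nat_finite fin X_def by blast
  define idx where "idx = inv_into {0..<card X} e"
  have TX: "T \<alpha> \<in> X" for \<alpha> unfolding T_def X_def by blast
  have eidx: "e (idx x) = x" if "x \<in> X" for x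
    using e that unfolding idx_def by (meson bij_betw_inv_into_right)
  have idxQ: "idx x \<in> {0..<card X}" if "x \<in> X" for x
    using e that unfolding idx_def by (metis bij_betw_def inv_into_into)
  define Q where "Q = {0..<card X}"
  define \<delta> where "\<delta> q \<sigma> = idx (h (Delta [\<sigma>] (e q)))" for q \<sigma>
  define w where "w q \<sigma> = g (Delta [\<sigma>] (e q))" for q \<sigma>
  define \<rho> where "\<rho> q = e q []" for q
  define u where "u = idx (T [])"
  have Tsnoc: "T (\<alpha> @ [\<sigma>]) = h (Delta [\<sigma>] (T \<alpha>))" for \<alpha> \<sigma>
    by (simp add: T_def)
  have \<delta>T: "\<delta> (idx (T \<alpha>)) \<sigma> = idx (T (\<alpha> @ [\<sigma>]))" for \<alpha> \<sigma>
    by (simp add: \<delta>_def eidx[OF TX] Tsnoc)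
  have wT: "w (idx (T \<alpha>)) \<sigma> = g (Delta [\<sigma>] (T \<alpha>))" for \<alpha> \<sigma>
    by (simp add: w_def eidx[OF TX])
  have ext: "ext_trans \<delta> u \<beta> = idx (T \<beta>)" for \<beta>
    by (induction \<beta> rule: rev_induct) (simp_all add: u_def \<delta>T)
  have gen: "T \<alpha> \<beta> = wstar \<delta> w (idx (T \<alpha>)) \<beta> * T (\<alpha> @ \<beta>) []" for \<alpha> \<beta>
  proof (induction \<beta> arbitrary: \<alpha>)
    case Nil
    then show ?case by simp
  next
    case (Cons \<sigma> \<beta>)
    have "T \<alpha> (\<sigma> # \<beta>) = Delta [\<sigma>] (T \<alpha>) \<beta>" by (simp add: Delta_def)
    also have "\<dots> = g (Delta [\<sigma>] (T \<alpha>)) * h (Delta [\<sigma>] (T \<alpha>)) \<beta>"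
      by (metis fl lmult_def)
    also have "\<dots> = w (idx (T \<alpha>)) \<sigma> * T (\<alpha> @ [\<sigma>]) \<beta>"
      by (simp add: wT Tsnoc)
    also have "\<dots> = w (idx (T \<alpha>)) \<sigma> * (wstar \<delta> w (idx (T (\<alpha> @ [\<sigma>]))) \<beta> * T (\<alpha> @ [\<sigma>] @ \<beta>) [])"
      using Cons.IH[of "\<alpha> @ [\<sigma>]"] by simp
    also have "\<dots> = wstar \<delta> w (idx (T \<alpha>)) (\<sigma> # \<beta>) * T (\<alpha> @ \<sigma> # \<beta>) []"
      by (simp add: wstar_cons \<delta>T mult.assoc)
    finally show ?case .
  qed
  have MD: "is_MDFA Q u \<delta>"
    unfolding is_MDFA_def
  proof (intro conjI ballI allI)
    show "finite Q" by (simp add: Q_def)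
    show "u \<in> Q" using idxQ[OF TX] by (simp add: Q_def u_def)
    then show "Q \<noteq> {}" by blast
    fix q \<sigma> assume "q \<in> Q"
    then have "e q \<in> X" using e by (auto simp: Q_def bij_betw_def)
    then obtain \<alpha> where "e q = T \<alpha>" by (auto simp: X_def T_def)
    then have "\<delta> q \<sigma> = idx (T (\<alpha> @ [\<sigma>]))" by (simp add: \<delta>_def Tsnoc)
    then show "\<delta> q \<sigma> \<in> Q" using idxQ[OF TX] by (simp add: Q_def)
  qed
  have "l = recognized u (g l) \<delta> w \<rho>"
  proof
    fix \<alpha>
    have "l \<alpha> = g l * h l \<alpha>" by (metis fl lmult_def)
    also have "h l \<alpha> = T [] \<alpha>" by (simp add: T_def)
    also have "\<dots> = wstar \<delta> w u \<alpha> * \<rho> (ext_trans \<delta> u \<alpha>)"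
      using gen[of "[]" \<alpha>] ext[of \<alpha>] by (simp add: u_def[symmetric] \<rho>_def eidx[OF TX])
    finally show "l \<alpha> = recognized u (g l) \<delta> w \<rho> \<alpha>"
      by (simp add: recognized_def mult.assoc)
  qed
  then show ?thesis using MD unfolding R_L_def by blast
qed

theorem lemma6:
  fixes g :: "('b::finite list \<Rightarrow> 'm::monoid_mult) \<Rightarrow> 'm"
    and h :: "('b list \<Rightarrow> 'm) \<Rightarrow> ('b list \<Rightarrow> 'm)"
  assumes "\<not> has_zero TYPE('m)"
    and "maximal_factorization g h"
  shows "(R_L :: ('b list \<Rightarrow> 'm) set) = RcgCap g h"
proof
  show "R_L \<subseteq> RcgCap g h"
    using dir2[OF assms(2)] unfolding R_L_def RcgCap_def by blast
  show "RcgCap g h \<subseteq> R_L"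
    using dir1[OF assms(2)] unfolding RcgCap_def by blast
qed

end
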